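(* Let $(\Lambda_i,W_i,\mathscr{M}_i)$, $i=1,2$, be flag order data over a field $\mathbb{K}$, let $\Lambda=\Lambda_1\otimes_{\mathbb{K}}\Lambda_2$ and $\hat W=(W_1\times W_2)\ltimes(\mathscr{M}_1\times\mathscr{M}_2)=\hat W_1\times\hat W_2$ acting factorwise on $\Lambda$. For pairwise distinct $\sigma_1,\dots,\sigma_n\in\hat W$, there exist $a_1,\dots,a_n\in\Lambda$ with $\det\big((\sigma_i(a_j))_{i,j=1}^n\big)\neq0$ such that each $a_j$ is a simple tensor $a_j=b_j\otimes c_j$ with $b_j\in\Lambda_1$, $c_j\in\Lambda_2$.
   Context: Flag order data $(\Lambda,W,\mathscr{M})$: $\Lambda$ a Noetherian integrally closed domain, $W$ a finite subgroup of $\mathrm{Aut}(\Lambda)$, $\mathscr{M}$ a submonoid of $\mathrm{Aut}(\Lambda)$ with $(\mathscr{M}\mathscr{M}^{-1})\cap W=\{1\}$ and $W$ normalizing $\mathscr{M}$; $\hat W_i=W_i\ltimes\mathscr{M}_i$. $\Lambda_1\otimes\Lambda_2$ is assumed to be an integral domain, and $(w_1,w_2)(a\otimes b)=w_1(a)\otimes w_2(b)$. *)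

theory Defs
  imports "HOL-Computational_Algebra.Fraction_Field" "HOL-Computational_Algebra.Polynomial"
          "Jordan_Normal_Form.Determinant"
begin

definition is_ideal :: "'a::comm_ring_1 set \<Rightarrow> bool" where
  "is_ideal I \<longleftrightarrow> 0 \<in> I \<and> (\<forall>x\<in>I. \<forall>y\<in>I. x + y \<in> I) \<and> (\<forall>r x. x \<in> I \<longrightarrow> r * x \<in> I)"

definition noetherian_ring :: "'a::comm_ring_1 itself \<Rightarrow> bool" where
  "noetherian_ring _ \<longleftrightarrow> (\<forall>I::'a set. is_ideal I \<longrightarrow>
      (\<exists>F. finite F \<and> I = {\<Sum>f\<in>F. r f * f | r. True}))"

definition integrally_closed :: "'a::idom itself \<Rightarrow> bool" where
  "integrally_closed _ \<longleftrightarrow> (\<forall>x::'a fract.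
      (\<exists>p::'a poly. lead_coeff p = 1 \<and> poly (map_poly (\<lambda>a. Fract a 1) p) x = 0)
      \<longrightarrow> (\<exists>a. x = Fract a 1))"

definition k_algebra :: "('k::field \<Rightarrow> 'a::comm_ring_1 \<Rightarrow> 'a) \<Rightarrow> bool" where
  "k_algebra sc \<longleftrightarrow> vector_space sc \<and> (\<forall>k x y. sc k (x * y) = sc k x * y)"

definition k_aut :: "('k::field \<Rightarrow> 'a::comm_ring_1 \<Rightarrow> 'a) \<Rightarrow> ('a \<Rightarrow> 'a) \<Rightarrow> bool" where
  "k_aut sc f \<longleftrightarrow> bij f \<and> (\<forall>x y. f (x + y) = f x + f y) \<and> (\<forall>x y. f (x * y) = f x * f y)
      \<and> f 1 = 1 \<and> (\<forall>k x. f (sc k x) = sc k (f x))"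

(* flag order data (Lambda, W, M) over K; Lambda is the whole type 'a *)
definition flag_order_data ::
  "('k::field \<Rightarrow> 'a::idom \<Rightarrow> 'a) \<Rightarrow> ('a \<Rightarrow> 'a) set \<Rightarrow> ('a \<Rightarrow> 'a) set \<Rightarrow> bool" where
  "flag_order_data sc W M \<longleftrightarrow>
     k_algebra sc \<and> noetherian_ring TYPE('a) \<and> integrally_closed TYPE('a) \<and>
     \<comment> \<open>W finite subgroup of Aut\<close>
     finite W \<and> W \<subseteq> Collect (k_aut sc) \<and> id \<in> W \<and>
     (\<forall>f\<in>W. \<forall>g\<in>W. f \<circ> g \<in> W) \<and> (\<forall>f\<in>W. inv_into UNIV f \<in> W) \<and>
     \<comment> \<open>M submonoid of Aut\<close>
     M \<subseteq> Collect (k_aut sc) \<and> id \<in> M \<and> (\<forall>f\<in>M. \<forall>g\<in>M. f \<circ> g \<in> M) \<and>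
     \<comment> \<open>(M M^-1) \<inter> W = {1}\<close>
     {m \<circ> inv_into UNIV m' | m m'. m \<in> M \<and> m' \<in> M} \<inter> W = {id} \<and>
     \<comment> \<open>W normalizes M\<close>
     (\<forall>w\<in>W. {w \<circ> m \<circ> inv_into UNIV w | m. m \<in> M} = M)"

(* Lambda = Lambda1 \<otimes>_K Lambda2 realised by a K-bilinear multiplicative map t:
   spanning, and sending products of linearly independent sets injectively
   onto linearly independent sets (characterisation of the tensor product
   of vector spaces), with the algebra structure (a\<otimes>b)(a'\<otimes>b') = aa'\<otimes>bb'. *)
definition tensor_product_algebra ::
  "('k::field \<Rightarrow> 'a::comm_ring_1 \<Rightarrow> 'a) \<Rightarrow> ('k \<Rightarrow> 'b::comm_ring_1 \<Rightarrow> 'b) \<Rightarrow>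
   ('k \<Rightarrow> 'c::comm_ring_1 \<Rightarrow> 'c) \<Rightarrow> ('a \<Rightarrow> 'b \<Rightarrow> 'c) \<Rightarrow> bool" where
  "tensor_product_algebra s1 s2 s t \<longleftrightarrow>
     k_algebra s \<and>
     (\<forall>x x' y. t (x + x') y = t x y + t x' y) \<and>
     (\<forall>x y y'. t x (y + y') = t x y + t x y') \<and>
     (\<forall>k x y. t (s1 k x) y = s k (t x y)) \<and>
     (\<forall>k x y. t x (s2 k y) = s k (t x y)) \<and>
     module.span s (range (case_prod t)) = UNIV \<and>
     (\<forall>B1 B2. \<not> module.dependent s1 B1 \<longrightarrow> \<not> module.dependent s2 B2 \<longrightarrow>
        inj_on (case_prod t) (B1 \<times> B2) \<and> \<not> module.dependent s (case_prod t ` (B1 \<times> B2))) \<and>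
     (\<forall>x x' y y'. t (x * x') (y * y') = t x y * t x' y') \<and>
     t 1 1 = 1"

end

theory Submission
  imports Defs
begin

lemma indep_lemma:
  fixes \<chi> :: "nat \<Rightarrow> 'g \<Rightarrow> 'c::idom"
  assumes D: "det (mat n n (\<lambda>(i,j). \<chi> i (a j))) \<noteq> 0"
    and R: "\<forall>x. (\<Sum>i<n. e i * \<chi> i x) = 0"
  shows "\<forall>i<n. e i = 0"
proof -
  let ?T = "mat n n (\<lambda>(j,i). \<chi> i (a j))"
  have "transpose_mat ?T = mat n n (\<lambda>(i,j). \<chi> i (a j))"
    by (rule eq_matI) auto
  hence dT: "det ?T \<noteq> 0" using D det_transpose[of ?T n] by auto
  have Tv: "?T *\<^sub>v vec n e = 0\<^sub>v n"
  proof (rule eq_vecI)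
    fix j assume j: "j < dim_vec (0\<^sub>v n :: 'c vec)"
    have "(?T *\<^sub>v vec n e) $ j = (\<Sum>i<n. e i * \<chi> i (a j))"
      using j by (simp add: mult_mat_vec_def scalar_prod_def mult.commute lessThan_atLeast0)
    thus "(?T *\<^sub>v vec n e) $ j = 0\<^sub>v n $ j" using R j by simp
  qed simp
  have "vec n e = 0\<^sub>v n"
  proof -
    have "\<forall>v. v \<in> carrier_vec n \<longrightarrow> v = 0\<^sub>v n \<or> ?T *\<^sub>v v \<noteq> 0\<^sub>v n"
      using det_0_iff_vec_prod_zero[of ?T n] dT Tv by auto
    from this[rule_format, OF vec_carrier[of n e]] show ?thesis using dT Tv by auto
  qed
  show ?thesis
  proof (intro allI impI)
    fix i assume "i < n"
    hence "vec n e $ i = e i" "0\<^sub>v n $ i = (0::'c)" by auto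
    thus "e i = 0" using \<open>vec n e = 0\<^sub>v n\<close> by simp
  qed
qed

lemma dedekind_det:
  fixes \<chi> :: "nat \<Rightarrow> 'g \<Rightarrow> 'c::idom" and mul :: "'g \<Rightarrow> 'g \<Rightarrow> 'g"
  assumes hom: "\<forall>i x y. \<chi> i (mul x y) = \<chi> i x * \<chi> i y"
    and one: "\<forall>i. \<chi> i e = 1"
    and inj: "inj_on \<chi> {..<n}"
  shows "\<exists>a. det (mat n n (\<lambda>(i,j). \<chi> i (a j))) \<noteq> 0"
  using inj
proof (induction n)
  case 0
  then show ?case by (simp add: det_def)
next
  case (Suc n)
  from Suc.prems have injn: "inj_on \<chi> {..<n}" by (rule inj_on_subset) auto
  from Suc.IH[OF injn] obtain a where D: "det (mat n n (\<lambda>(i,j). \<chi> i (a j))) \<noteq> 0" by blast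
  define A where "A x = mat (Suc n) (Suc n) (\<lambda>(i,j). \<chi> i (if j < n then a j else x))" for x
  show ?case
  proof (rule ccontr)
    assume N: "\<nexists>a. det (mat (Suc n) (Suc n) (\<lambda>(i,j). \<chi> i (a j))) \<noteq> 0"
    have Z: "det (A x) = 0" for x
    proof -
      have N': "\<forall>a. det (mat (Suc n) (Suc n) (\<lambda>(i,j). \<chi> i (a j))) = 0"
        using N by blast
      show ?thesis using spec[OF N', of "\<lambda>j. if j < n then a j else x"] unfolding A_def by simp
    qed
    have del: "mat_delete (A x) i n = mat_delete (A e) i n" for x i
      unfolding A_def mat_delete_def by (rule eq_matI) auto
    define C where "C i = cofactor (A e) i n" for i
    have Cn: "C n \<noteq> 0"
    proof -
      have "mat_delete (A e) n n = mat n n (\<lambda>(i,j). \<chi> i (a j))"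
        unfolding A_def mat_delete_def by (rule eq_matI) auto
      thus ?thesis using D unfolding C_def cofactor_def by (simp add: power_add[symmetric] mult_2[symmetric])
    qed
    have R: "(\<Sum>i<Suc n. C i * \<chi> i x) = 0" for x
    proof -
      have "det (A x) = (\<Sum>i<Suc n. A x $$ (i,n) * cofactor (A x) i n)"
        by (rule laplace_expansion_column) (auto simp: A_def)
      also have "\<dots> = (\<Sum>i<Suc n. C i * \<chi> i x)"
        proof (rule sum.cong)
        fix i assume "i \<in> {..<Suc n}"
        hence "A x $$ (i,n) = \<chi> i x" by (simp add: A_def)
        thus "A x $$ (i,n) * cofactor (A x) i n = C i * \<chi> i x"
          by (simp add: C_def cofactor_def del[of x])
      qed simp
      finally show ?thesis using Z by simp
    qed
    have R2: "(\<Sum>i<n. (C i * (\<chi> i y - \<chi> n y)) * \<chi> i x) = 0" for x y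
    proof -
      have "(\<Sum>i<Suc n. (C i * (\<chi> i y - \<chi> n y)) * \<chi> i x)
          = (\<Sum>i<Suc n. C i * \<chi> i (mul y x)) - \<chi> n y * (\<Sum>i<Suc n. C i * \<chi> i x)"
        by (simp add: hom algebra_simps sum_distrib_left sum_subtractf)
      also have "\<dots> = 0" using R by simp
      finally show ?thesis by simp
    qed
    have E: "\<forall>i<n. C i * (\<chi> i y - \<chi> n y) = 0" for y
      by (rule indep_lemma[of n \<chi> a, OF D]) (use R2 in auto)
    show False
    proof (cases "\<exists>i<n. C i \<noteq> 0")
      case True
      then obtain i where i: "i < n" "C i \<noteq> 0" by blast
      hence "\<chi> i = \<chi> n" using E by (auto intro!: ext)
      thus False using Suc.prems i inj_on_eq_iff[of \<chi> "{..<Suc n}" i n] by auto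
    next
      case False
      hence "(\<Sum>i<Suc n. C i * \<chi> i e) = C n" by (simp add: one)
      thus False using R[of e] Cn by simp
    qed
  qed
qed

lemma decomp_unique:
  assumes F: "flag_order_data sc W M" and w: "w \<in> W" "w' \<in> W" and m: "m \<in> M" "m' \<in> M"
    and eq: "w \<circ> m = w' \<circ> m'"
  shows "w = w' \<and> m = m'"
proof -
  have aut: "\<And>f. f \<in> W \<Longrightarrow> bij f" "\<And>f. f \<in> M \<Longrightarrow> bij f"
    using F unfolding flag_order_data_def k_aut_def by auto
  have "inv_into UNIV w' \<circ> w \<in> W" using F w unfolding flag_order_data_def by auto
  have "inv_into UNIV w' \<circ> w = m' \<circ> inv_into UNIV m"
  proof -
    have "inv_into UNIV w' \<circ> w \<circ> m = m'"
    proof -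
      have "inv_into UNIV w' \<circ> w \<circ> m = inv_into UNIV w' \<circ> (w' \<circ> m')" using eq by (simp add: comp_assoc)
      also have "\<dots> = (inv_into UNIV w' \<circ> w') \<circ> m'" by (simp add: comp_assoc)
      also have "\<dots> = m'" using inv_o_cancel[OF bij_is_inj[OF aut(1)[OF w(2)]]] by simp
      finally show ?thesis .
    qed
    hence "inv_into UNIV w' \<circ> w \<circ> m \<circ> inv_into UNIV m = m' \<circ> inv_into UNIV m" by simp
    moreover have "m \<circ> inv_into UNIV m = id" using aut(2)[OF m(1)] by (meson bij_is_surj surj_iff)
    ultimately show ?thesis by (simp add: comp_assoc)
  qed
  hence "inv_into UNIV w' \<circ> w \<in> {m \<circ> inv_into UNIV m' | m m'. m \<in> M \<and> m' \<in> M} \<inter> W"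
    using m \<open>inv_into UNIV w' \<circ> w \<in> W\<close> by blast
  hence "inv_into UNIV w' \<circ> w = id" using F unfolding flag_order_data_def by blast
  hence ww: "w = w'"
  proof -
    have "w' \<circ> inv_into UNIV w' = id" using aut(1)[OF w(2)] by (meson bij_is_surj surj_iff)
    hence "w = (w' \<circ> inv_into UNIV w') \<circ> w" by simp
    also have "\<dots> = w' \<circ> (inv_into UNIV w' \<circ> w)" by (simp add: comp_assoc)
    finally show ?thesis using \<open>inv_into UNIV w' \<circ> w = id\<close> by simp
  qed
  have "m = m'"
  proof -
    have c: "inv_into UNIV w \<circ> w = id" using inv_o_cancel[OF bij_is_inj[OF aut(1)[OF w(1)]]] .
    have "m = (inv_into UNIV w \<circ> w) \<circ> m" using c by simp
    also have "\<dots> = inv_into UNIV w \<circ> (w' \<circ> m')" using eq by (simp add: comp_assoc)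
    also have "\<dots> = m'" using ww c by (simp add: comp_assoc[symmetric])
    finally show ?thesis .
  qed
  thus ?thesis using ww by simp
qed

lemma t_nonzero1:
  assumes F1: "flag_order_data s1 W1 M1" and F2: "flag_order_data s2 W2 M2"
    and T: "tensor_product_algebra s1 s2 s t"
  shows "z \<noteq> 0 \<Longrightarrow> t z 1 \<noteq> 0" "z' \<noteq> 0 \<Longrightarrow> t 1 z' \<noteq> 0"
proof -
  have v1: "vector_space s1" using F1 unfolding flag_order_data_def k_algebra_def by auto
  have v2: "vector_space s2" using F2 unfolding flag_order_data_def k_algebra_def by auto
  have v: "vector_space s" using T unfolding tensor_product_algebra_def k_algebra_def by auto
  have I: "\<And>B1 B2. \<not> module.dependent s1 B1 \<Longrightarrow> \<not> module.dependent s2 B2 \<Longrightarrow>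
        \<not> module.dependent s (case_prod t ` (B1 \<times> B2))"
    using T unfolding tensor_product_algebra_def by blast
  show "t z 1 \<noteq> 0" if z: "z \<noteq> 0"
  proof -
    have "\<not> module.dependent s1 {z}" "\<not> module.dependent s2 {1}"
      using vector_space.dependent_single[OF v1] vector_space.dependent_single[OF v2] z by auto
    from I[OF this] show ?thesis using vector_space.dependent_single[OF v] by auto
  qed
  show "t 1 z' \<noteq> 0" if z: "z' \<noteq> 0"
  proof -
    have "\<not> module.dependent s1 {1}" "\<not> module.dependent s2 {z'}"
      using vector_space.dependent_single[OF v1] vector_space.dependent_single[OF v2] z by auto
    from I[OF this] show ?thesis using vector_space.dependent_single[OF v] by auto
  qed
qed

theorem mainTheorem6:
  fixes s1 :: "'k::field \<Rightarrow> 'a::idom \<Rightarrow> 'a"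
    and s2 :: "'k \<Rightarrow> 'b::idom \<Rightarrow> 'b"
    and s :: "'k \<Rightarrow> 'c::idom \<Rightarrow> 'c"
    and t :: "'a \<Rightarrow> 'b \<Rightarrow> 'c"
    and W1 M1 :: "('a \<Rightarrow> 'a) set" and W2 M2 :: "('b \<Rightarrow> 'b) set"
    and \<sigma> :: "nat \<Rightarrow> (('a \<Rightarrow> 'a) \<times> ('a \<Rightarrow> 'a)) \<times> (('b \<Rightarrow> 'b) \<times> ('b \<Rightarrow> 'b))"
    and n :: nat
  assumes "flag_order_data s1 W1 M1"
    and "flag_order_data s2 W2 M2"
    and "tensor_product_algebra s1 s2 s t"
    and "\<forall>i<n. \<sigma> i \<in> (W1 \<times> M1) \<times> (W2 \<times> M2)"
    and "inj_on \<sigma> {..<n}"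
  shows "\<exists>b :: nat \<Rightarrow> 'a. \<exists>c :: nat \<Rightarrow> 'b.
           det (mat n n (\<lambda>(i, j).
              t ((fst (fst (\<sigma> i)) \<circ> snd (fst (\<sigma> i))) (b j))
                ((fst (snd (\<sigma> i)) \<circ> snd (snd (\<sigma> i))) (c j)))) \<noteq> 0"
proof -
  note F1 = assms(1) and F2 = assms(2) and T = assms(3)
  define f where "f i = fst (fst (\<sigma> i)) \<circ> snd (fst (\<sigma> i))" for i
  define g where "g i = fst (snd (\<sigma> i)) \<circ> snd (snd (\<sigma> i))" for i
  define \<chi> where "\<chi> i p = (if i < n then t (f i (fst p)) (g i (snd p)) else 1)" for i and p :: "'a \<times> 'b"
  define mul where "mul p q = (fst p * fst q, snd p * snd q)" for p q :: "'a \<times> 'b"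
  have autf: "k_aut s1 (f i)" if "i < n" for i
  proof -
    have "fst (fst (\<sigma> i)) \<in> W1" "snd (fst (\<sigma> i)) \<in> M1" using assms(4) that by auto
    hence "k_aut s1 (fst (fst (\<sigma> i)))" "k_aut s1 (snd (fst (\<sigma> i)))"
      using F1 unfolding flag_order_data_def by auto
    thus ?thesis unfolding f_def k_aut_def by (simp add: bij_comp)
  qed
  have autg: "k_aut s2 (g i)" if "i < n" for i
  proof -
    have "fst (snd (\<sigma> i)) \<in> W2" "snd (snd (\<sigma> i)) \<in> M2" using assms(4) that by auto
    hence "k_aut s2 (fst (snd (\<sigma> i)))" "k_aut s2 (snd (snd (\<sigma> i)))"
      using F2 unfolding flag_order_data_def by auto
    thus ?thesis unfolding g_def k_aut_def by (simp add: bij_comp)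
  qed
  have tmul: "t (x * x') (y * y') = t x y * t x' y'" "t 1 1 = 1" for x x' y y'
    using T unfolding tensor_product_algebra_def by auto
  have tadd: "t (x + x') y = t x y + t x' y" "t x (y + y') = t x y + t x y'" for x x' y y'
    using T unfolding tensor_product_algebra_def by auto
  have tsub: "t (x - x') y = t x y - t x' y" "t x (y - y') = t x y - t x y'" for x x' y y'
  proof -
    have "t x y = t (x - x') y + t x' y" using tadd(1)[of "x - x'" x' y] by simp
    thus "t (x - x') y = t x y - t x' y" by (simp add: eq_diff_eq)
    have "t x y = t x (y - y') + t x y'" using tadd(2)[of x "y - y'" y'] by simp
    thus "t x (y - y') = t x y - t x y'" by (simp add: eq_diff_eq)
  qed
  have hom: "\<forall>i x y. \<chi> i (mul x y) = \<chi> i x * \<chi> i y"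
  proof (intro allI)
    fix i x y
    show "\<chi> i (mul x y) = \<chi> i x * \<chi> i y"
    proof (cases "i < n")
      case True
      have "f i (fst x * fst y) = f i (fst x) * f i (fst y)"
        using autf[OF True] unfolding k_aut_def by blast
      moreover have "g i (snd x * snd y) = g i (snd x) * g i (snd y)"
        using autg[OF True] unfolding k_aut_def by blast
      ultimately show ?thesis using True unfolding \<chi>_def mul_def by (simp add: tmul)
    qed (simp add: \<chi>_def)
  qed
  have one: "\<forall>i. \<chi> i (1,1) = 1"
  proof
    fix i show "\<chi> i (1,1) = 1"
    proof (cases "i < n")
      case True
      have "f i 1 = 1" "g i 1 = 1" using autf[OF True] autg[OF True] unfolding k_aut_def by blast+
      thus ?thesis using True unfolding \<chi>_def by (simp add: tmul)
    qed (simp add: \<chi>_def)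
  qed
  have inj: "inj_on \<chi> {..<n}"
  proof (rule inj_onI)
    fix i k assume i: "i \<in> {..<n}" and k: "k \<in> {..<n}" and eq: "\<chi> i = \<chi> k"
    have fe: "f i = f k"
    proof
      fix x
      have "t (f i x) 1 = t (f k x) 1"
      proof -
        have "g i 1 = 1" "g k 1 = 1" using autg i k unfolding k_aut_def by auto
        thus ?thesis using fun_cong[OF eq, of "(x, 1)"] i k unfolding \<chi>_def by simp
      qed
      hence "t (f i x - f k x) 1 = 0" by (simp add: tsub)
      thus "f i x = f k x" using t_nonzero1(1)[OF F1 F2 T, of "f i x - f k x"] by auto
    qed
    have ge: "g i = g k"
    proof
      fix x
      have "t 1 (g i x) = t 1 (g k x)"
      proof -
        have "f i 1 = 1" "f k 1 = 1" using autf i k unfolding k_aut_def by auto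
        thus ?thesis using fun_cong[OF eq, of "(1, x)"] i k unfolding \<chi>_def by simp
      qed
      hence "t 1 (g i x - g k x) = 0" by (simp add: tsub)
      thus "g i x = g k x" using t_nonzero1(2)[OF F1 F2 T, of "g i x - g k x"] by auto
    qed
    have s1: "fst (fst (\<sigma> i)) = fst (fst (\<sigma> k)) \<and> snd (fst (\<sigma> i)) = snd (fst (\<sigma> k))"
      by (rule decomp_unique[OF F1]) (use assms(4) i k fe in \<open>auto simp: f_def\<close>)
    have s2: "fst (snd (\<sigma> i)) = fst (snd (\<sigma> k)) \<and> snd (snd (\<sigma> i)) = snd (snd (\<sigma> k))"
      by (rule decomp_unique[OF F2]) (use assms(4) i k ge in \<open>auto simp: g_def\<close>)
    have "\<sigma> i = \<sigma> k" using s1 s2 by (simp add: prod_eq_iff)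
    thus "i = k" using assms(5) i k by (meson inj_on_eq_iff)
  qed
  obtain a where D: "det (mat n n (\<lambda>(i,j). \<chi> i (a j))) \<noteq> 0"
    using dedekind_det[OF hom one inj] by blast
  have EQ: "mat n n (\<lambda>(i,j). \<chi> i (a j)) = mat n n (\<lambda>(i, j).
              t ((fst (fst (\<sigma> i)) \<circ> snd (fst (\<sigma> i))) (fst (a j)))
                ((fst (snd (\<sigma> i)) \<circ> snd (snd (\<sigma> i))) (snd (a j))))"
    by (rule eq_matI) (auto simp: \<chi>_def f_def g_def)
  show ?thesis
    by (rule exI[of _ "\<lambda>j. fst (a j)"], rule exI[of _ "\<lambda>j. snd (a j)"]) (use D EQ in simp)
qed

end
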